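(* With notation as in the context, let $\overline{\mathcal P}=\{T^l(W): W\in\mathcal V,\ 0\le l\le|W|-1\}$. Then: (1) for each $k\ge1$ the sets $W\in\mathcal V$ with $|W|=k$ form a partition of $Y_k^0$, and $\overline{\mathcal P}$ is a quasi-partition of $X$; (2) $\overline{\mathcal P}$ is finer than $\mathcal P\cup\{E\}$ and than $\{Y_k^l: Y_k^l\ne\emptyset\}$; (3) if $\overline Z\in\overline{\mathcal P}$ and $\overline Z\subseteq Y_k^0$, then $T^i(\overline Z)\in\overline{\mathcal P}$ for $1\le i\le k-1$; and $\overline{\mathcal P}$ is the coarsest quasi-partition of $X$ with properties (2) and (3). Moreover, $\chi_{\overline Z}\in\mathcal B$ for every $\overline Z\in\overline{\mathcal P}$.
   Context: Let $X$ be an infinite, totally disconnected, compact metrizable space, $T$ a homeomorphism of $X$, $\mu$ a full (positive on nonempty open sets), ergodic, $T$-invariant Borel probability measure, $K$ a field with involution, $C_K(X)$ the $*$-algebra of locally constant functions $X\to K$, $\mathcal A=C_K(X)\rtimes_T\mathbb Z$ the algebraic crossed product (finite sums $\sum f_it^i$, $tf=(f\circ T^{-1})t$, $(ft^i)^*=t^{-i}f^*$). Let $E$ be a nonempty clopen set, $\mathcal P$ a partition of $X\setminus E$ (finite family of nonempty pairwise disjoint clopen sets with union $X\setminus E$), and $\mathcal B$ the unital $*$-subalgebra of $\mathcal A$ generated by $\{\chi_Zt:Z\in\mathcal P\}$. $\mathcal V$ is the set of nonempty sets $W=E\cap T^{-1}(Z_1)\cap\cdots\cap T^{-k+1}(Z_{k-1})\cap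 T^{-k}(E)$ with $k\ge1$, $Z_1,\dots,Z_{k-1}\in\mathcal P$, and $|W|:=k$. With $r_E(x)=\min\{l>0:T^l(x)\in E\}$ the first return map on $E$, $Y_k^l=T^l(r_E^{-1}(k))$ for $0\le l\le k-1$. A quasi-partition of $X$ is a finite or countable family of nonempty pairwise disjoint clopen sets whose union has full $\mu$-measure; a quasi-partition (or partition) $\mathcal Q_2$ is finer than $\mathcal Q_1$ if each member of $\mathcal Q_2$ is contained in a member of $\mathcal Q_1$. *)

theory Defs
  imports "HOL-Probability.Probability"
begin

definition clopen :: "'a::topological_space set \<Rightarrow> bool" where
  "clopen S \<longleftrightarrow> open S \<and> closed S"

definition totally_disconnected_space :: "'a::topological_space itself \<Rightarrow> bool" where
  "totally_disconnected_space _ \<longleftrightarrow>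
     (\<forall>S::'a set. connected S \<longrightarrow> S = {} \<or> (\<exists>x. S = {x}))"

definition Tz :: "('a \<Rightarrow> 'a) \<Rightarrow> ('a \<Rightarrow> 'a) \<Rightarrow> int \<Rightarrow> 'a \<Rightarrow> 'a" where
  "Tz T Tinv i = (if 0 \<le> i then T ^^ nat i else Tinv ^^ nat (- i))"

definition full_measure :: "'a::topological_space measure \<Rightarrow> bool" where
  "full_measure \<mu> \<longleftrightarrow> (\<forall>U. open U \<and> U \<noteq> {} \<longrightarrow> measure \<mu> U > 0)"

definition T_invariant :: "('a::topological_space \<Rightarrow> 'a) \<Rightarrow> 'a measure \<Rightarrow> bool" where
  "T_invariant T \<mu> \<longleftrightarrow> (\<forall>A \<in> sets borel. emeasure \<mu> (T -` A) = emeasure \<mu> A)"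

definition ergodic :: "('a::topological_space \<Rightarrow> 'a) \<Rightarrow> 'a measure \<Rightarrow> bool" where
  "ergodic T \<mu> \<longleftrightarrow> (\<forall>A \<in> sets borel. T -` A = A \<longrightarrow> measure \<mu> A = 0 \<or> measure \<mu> A = 1)"

definition partition_of :: "'a::topological_space set \<Rightarrow> 'a set set \<Rightarrow> bool" where
  "partition_of S Q \<longleftrightarrow> finite Q \<and> (\<forall>A\<in>Q. A \<noteq> {} \<and> clopen A)
     \<and> (\<forall>A\<in>Q. \<forall>B\<in>Q. A \<noteq> B \<longrightarrow> A \<inter> B = {}) \<and> \<Union>Q = S"

definition quasi_partition :: "'a::topological_space measure \<Rightarrow> 'a set set \<Rightarrow> bool" where
  "quasi_partition \<mu> Q \<longleftrightarrow> countable Q \<and> (\<forall>A\<in>Q. A \<noteq> {} \<and> clopen A)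
     \<and> (\<forall>A\<in>Q. \<forall>B\<in>Q. A \<noteq> B \<longrightarrow> A \<inter> B = {}) \<and> measure \<mu> (\<Union>Q) = 1"

definition finer :: "'a set set \<Rightarrow> 'a set set \<Rightarrow> bool" where
  "finer Q2 Q1 \<longleftrightarrow> (\<forall>A\<in>Q2. \<exists>B\<in>Q1. A \<subseteq> B)"

text \<open>Vk T E P k: the sets W = E \<inter> T^{-1}Z_1 \<inter> ... \<inter> T^{-k+1}Z_{k-1} \<inter> T^{-k}E that are
  nonempty, i.e. the members W of V with |W| = k.\<close>
definition Vk :: "('a \<Rightarrow> 'a) \<Rightarrow> 'a set \<Rightarrow> 'a set set \<Rightarrow> nat \<Rightarrow> 'a set set" where
  "Vk T E P k = {W. W \<noteq> {} \<and> 1 \<le> k \<and> (\<exists>Z::nat \<Rightarrow> 'a set. (\<forall>j\<in>{1..<k}. Z j \<in> P) \<and>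
      W = E \<inter> (\<Inter>j\<in>{1..<k}. (T ^^ j) -` Z j) \<inter> (T ^^ k) -` E)}"

definition Vset :: "('a \<Rightarrow> 'a) \<Rightarrow> 'a set \<Rightarrow> 'a set set \<Rightarrow> 'a set set" where
  "Vset T E P = (\<Union>k\<in>{1..}. Vk T E P k)"

definition returns :: "('a \<Rightarrow> 'a) \<Rightarrow> 'a set \<Rightarrow> 'a \<Rightarrow> bool" where
  "returns T E x \<longleftrightarrow> (\<exists>l>0. (T ^^ l) x \<in> E)"

definition r_E :: "('a \<Rightarrow> 'a) \<Rightarrow> 'a set \<Rightarrow> 'a \<Rightarrow> nat" where
  "r_E T E x = (LEAST l. l > 0 \<and> (T ^^ l) x \<in> E)"

definition Y :: "('a \<Rightarrow> 'a) \<Rightarrow> 'a set \<Rightarrow> nat \<Rightarrow> nat \<Rightarrow> 'a set" where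
  "Y T E k l = (T ^^ l) ` {x\<in>E. returns T E x \<and> r_E T E x = k}"

definition Pbar :: "('a \<Rightarrow> 'a) \<Rightarrow> 'a set \<Rightarrow> 'a set set \<Rightarrow> 'a set set" where
  "Pbar T E P = {(T ^^ l) ` W | W k l. k \<ge> 1 \<and> W \<in> Vk T E P k \<and> l < k}"

definition orbit_closed :: "('a \<Rightarrow> 'a) \<Rightarrow> 'a set \<Rightarrow> 'a set set \<Rightarrow> bool" where
  "orbit_closed T E Q \<longleftrightarrow> (\<forall>Zb\<in>Q. \<forall>k. Zb \<subseteq> Y T E k 0 \<longrightarrow>
      (\<forall>i. 1 \<le> i \<and> i \<le> k - 1 \<longrightarrow> (T ^^ i) ` Zb \<in> Q))"

definition Ysets :: "('a \<Rightarrow> 'a) \<Rightarrow> 'a set \<Rightarrow> 'a set set" where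
  "Ysets T E = {Y T E k l | k l. l < k \<and> Y T E k l \<noteq> {}}"

text \<open>An element \<Sum> f_i t^i is represented by its coefficient function i \<mapsto> f_i
  (finitely many nonzero, each locally constant).\<close>
type_synonym ('a, 'k) cp = "int \<Rightarrow> 'a \<Rightarrow> 'k"

definition locally_constant :: "('a::topological_space \<Rightarrow> 'k) \<Rightarrow> bool" where
  "locally_constant f \<longleftrightarrow> (\<forall>x. \<exists>U. open U \<and> x \<in> U \<and> (\<forall>y\<in>U. f y = f x))"

definition cp_carrier :: "('a::topological_space, 'k::zero) cp set" where
  "cp_carrier = {a. finite {i. a i \<noteq> (\<lambda>_. 0)} \<and> (\<forall>i. locally_constant (a i))}"

text \<open>Product: (f t^i)(g t^j) = f (g \<circ> T^{-i}) t^{i+j}.\<close>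
definition cp_mult :: "('a \<Rightarrow> 'a) \<Rightarrow> ('a \<Rightarrow> 'a) \<Rightarrow> ('a, 'k::comm_ring_1) cp \<Rightarrow> ('a, 'k) cp \<Rightarrow> ('a, 'k) cp" where
  "cp_mult T Tinv a b = (\<lambda>n x. \<Sum>i\<in>{i. a i \<noteq> (\<lambda>_. 0)}. a i x * b (n - i) (Tz T Tinv (- i) x))"

definition cp_add :: "('a, 'k::plus) cp \<Rightarrow> ('a, 'k) cp \<Rightarrow> ('a, 'k) cp" where
  "cp_add a b = (\<lambda>n x. a n x + b n x)"

definition cp_smult :: "'k::times \<Rightarrow> ('a, 'k) cp \<Rightarrow> ('a, 'k) cp" where
  "cp_smult c a = (\<lambda>n x. c * a n x)"

text \<open>Involution: (f t^i)^* = t^{-i} f^* = (f^* \<circ> T^i) t^{-i}.\<close>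
definition cp_star :: "('a \<Rightarrow> 'a) \<Rightarrow> ('a \<Rightarrow> 'a) \<Rightarrow> ('k \<Rightarrow> 'k) \<Rightarrow> ('a, 'k) cp \<Rightarrow> ('a, 'k) cp" where
  "cp_star T Tinv invol a = (\<lambda>n x. invol (a (- n) (Tz T Tinv (- n) x)))"

definition cp_one :: "('a, 'k::{zero,one}) cp" where
  "cp_one = (\<lambda>n x. if n = 0 then 1 else 0)"

definition cp_fun :: "('a \<Rightarrow> 'k::zero) \<Rightarrow> ('a, 'k) cp" where
  "cp_fun f = (\<lambda>n x. if n = 0 then f x else 0)"

definition cp_chi_t :: "'a set \<Rightarrow> ('a, 'k::{zero,one}) cp" where
  "cp_chi_t Z = (\<lambda>n x. if n = 1 \<and> x \<in> Z then 1 else 0)"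

definition chi :: "'a set \<Rightarrow> 'a \<Rightarrow> 'k::{zero,one}" where
  "chi Z x = (if x \<in> Z then 1 else 0)"

inductive_set Bsub :: "('a \<Rightarrow> 'a) \<Rightarrow> ('a \<Rightarrow> 'a) \<Rightarrow> ('k::field \<Rightarrow> 'k) \<Rightarrow> 'a set set \<Rightarrow> ('a, 'k) cp set"
  for T Tinv invol P where
  gen: "Z \<in> P \<Longrightarrow> cp_chi_t Z \<in> Bsub T Tinv invol P"
| one: "cp_one \<in> Bsub T Tinv invol P"
| add: "a \<in> Bsub T Tinv invol P \<Longrightarrow> b \<in> Bsub T Tinv invol P \<Longrightarrow> cp_add a b \<in> Bsub T Tinv invol P"
| smult: "a \<in> Bsub T Tinv invol P \<Longrightarrow> cp_smult c a \<in> Bsub T Tinv invol P"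
| mult: "a \<in> Bsub T Tinv invol P \<Longrightarrow> b \<in> Bsub T Tinv invol P \<Longrightarrow> cp_mult T Tinv a b \<in> Bsub T Tinv invol P"
| star: "a \<in> Bsub T Tinv invol P \<Longrightarrow> cp_star T Tinv invol a \<in> Bsub T Tinv invol P"

definition field_involution :: "('k::field \<Rightarrow> 'k) \<Rightarrow> bool" where
  "field_involution invol \<longleftrightarrow> (\<forall>a b. invol (a + b) = invol a + invol b \<and> invol (a * b) = invol a * invol b)
     \<and> (\<forall>a. invol (invol a) = a)"

end

theory Submission
  imports Defs "HOL-Library.FuncSet"
begin


locale dyn =
  fixes T Tinv :: "'a::topological_space \<Rightarrow> 'a" and E :: "'a set" and P :: "'a set set"
  assumes TT: "\<And>x. T (Tinv x) = x" and TT2: "\<And>x. Tinv (T x) = x"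
    and contT: "continuous_on UNIV T" and contTi: "continuous_on UNIV Tinv"
    and E_clopen: "clopen E" and P_part: "partition_of (UNIV - E) P"
begin

lemma fSuc: "(f^^Suc n) y = (f^^n) (f y)"
  by (simp only: funpow_Suc_right comp_apply)

lemma fSuc2: "(f^^Suc n) y = f ((f^^n) y)"
  by simp

lemma Tn_Tin[simp]: "(T^^n) ((Tinv^^n) x) = x"
proof (induction n arbitrary: x)
  case (Suc n)
  have "(T^^Suc n) ((Tinv^^Suc n) x) = (T^^n) (T (Tinv ((Tinv^^n) x)))"
    by (simp only: fSuc[where f=T] fSuc2[where f=Tinv] comp_apply)
  then show ?case using Suc TT by simp
qed simp

lemma Tin_Tn[simp]: "(Tinv^^n) ((T^^n) x) = x"
proof (induction n arbitrary: x)
  case (Suc n)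
  have "(Tinv^^Suc n) ((T^^Suc n) x) = (Tinv^^n) (Tinv (T ((T^^n) x)))"
    by (simp only: fSuc[where f=Tinv] fSuc2[where f=T] comp_apply)
  then show ?case using Suc TT2 by simp
qed simp

lemma inj_Tn: "inj (T^^n)"
  by (metis Tin_Tn injI)

lemma Tn_eq_iff[simp]: "(T^^n) x = (T^^n) y \<longleftrightarrow> x = y"
  using inj_Tn by (auto dest: injD)

lemma image_Tn: "(T^^n) ` S = (Tinv^^n) -` S"
  by (auto, metis Tn_Tin image_eqI)

lemma cont_Tn: "continuous_on UNIV (T^^n)"
  by (induction n) (auto intro: continuous_on_compose2[OF contT] continuous_on_id)

lemma cont_Tin: "continuous_on UNIV (Tinv^^n)"
  by (induction n) (auto intro: continuous_on_compose2[OF contTi] continuous_on_id)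

lemma clopen_vimage_Tn: "clopen S \<Longrightarrow> clopen ((T^^n) -` S)"
  unfolding clopen_def using cont_Tn open_vimage closed_vimage by blast

lemma clopen_image_Tn: "clopen S \<Longrightarrow> clopen ((T^^n) ` S)"
  unfolding clopen_def image_Tn using cont_Tin open_vimage closed_vimage by blast

lemma P_fin: "finite P" and P_ne: "\<And>Z. Z \<in> P \<Longrightarrow> Z \<noteq> {}" and P_clopen: "\<And>Z. Z \<in> P \<Longrightarrow> clopen Z"
  and P_disj: "\<And>A B. A \<in> P \<Longrightarrow> B \<in> P \<Longrightarrow> A \<noteq> B \<Longrightarrow> A \<inter> B = {}"
  and P_Un: "\<Union>P = UNIV - E"
  using P_part unfolding partition_of_def by auto

lemma P_subE: "Z \<in> P \<Longrightarrow> Z \<inter> E = {}"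
  using P_Un by auto

definition R :: "nat \<Rightarrow> 'a set" where
  "R k = {x\<in>E. returns T E x \<and> r_E T E x = k}"

lemma r_E_props:
  assumes "returns T E x"
  shows "0 < r_E T E x" "(T^^r_E T E x) x \<in> E" "\<And>j. 0 < j \<Longrightarrow> j < r_E T E x \<Longrightarrow> (T^^j) x \<notin> E"
proof -
  have ex: "\<exists>l. l > 0 \<and> (T ^^ l) x \<in> E" using assms unfolding returns_def by auto
  show "0 < r_E T E x" "(T^^r_E T E x) x \<in> E" using LeastI_ex[OF ex] unfolding r_E_def by auto
  show "\<And>j. 0 < j \<Longrightarrow> j < r_E T E x \<Longrightarrow> (T^^j) x \<notin> E"
    using not_less_Least unfolding r_E_def by blast
qed

lemma R_char: "x \<in> R k \<longleftrightarrow> x \<in> E \<and> 0 < k \<and> (T^^k) x \<in> E \<and> (\<forall>j. 0 < j \<and> j < k \<longrightarrow> (T^^j) x \<notin> E)"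
proof
  assume "x \<in> R k"
  then show "x \<in> E \<and> 0 < k \<and> (T^^k) x \<in> E \<and> (\<forall>j. 0 < j \<and> j < k \<longrightarrow> (T^^j) x \<notin> E)"
    unfolding R_def using r_E_props by blast
next
  assume a: "x \<in> E \<and> 0 < k \<and> (T^^k) x \<in> E \<and> (\<forall>j. 0 < j \<and> j < k \<longrightarrow> (T^^j) x \<notin> E)"
  then have ret: "returns T E x" unfolding returns_def by auto
  have "r_E T E x = k" unfolding r_E_def
    by (rule Least_equality) (use a in \<open>auto simp: not_less[symmetric]\<close>)
  then show "x \<in> R k" using a ret unfolding R_def by auto
qed

lemma Y_eq: "Y T E k l = (T^^l) ` R k"
  unfolding Y_def R_def by simp

lemma Y0: "Y T E k 0 = R k"
  unfolding Y_eq by simp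

lemma R0: "R 0 = {}"
  using R_char by auto

lemma disj_aux:
  assumes "l \<le> l'" "(T^^l) x = (T^^l') x'" "x \<in> R k" "x' \<in> R k'" "l' < k'"
  shows "l = l' \<and> x = x'"
proof -
  have "(T^^l') x' = (T^^l) ((T^^(l'-l)) x')"
    using assms(1) by (metis funpow_add le_add_diff_inverse o_apply)
  then have xx: "x = (T^^(l'-l)) x'" using assms(2) by simp
  show ?thesis
  proof (cases "l' - l = 0")
    case True then show ?thesis using xx assms(1) by simp
  next
    case False
    then have "(T^^(l'-l)) x' \<notin> E" using assms(4,5) R_char by auto
    moreover have "x \<in> E" using assms(3) R_char by auto
    ultimately show ?thesis using xx by simp
  qed
qed

lemma Y_disj:
  assumes "y \<in> Y T E k l" "y \<in> Y T E k' l'" "l < k" "l' < k'"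
  shows "k = k' \<and> l = l'"
proof -
  obtain x x' where x: "x \<in> R k" "y = (T^^l) x" and x': "x' \<in> R k'" "y = (T^^l') x'"
    using assms(1,2) unfolding Y_eq by auto
  have "l = l' \<and> x = x'"
  proof (cases "l \<le> l'")
    case True then show ?thesis using disj_aux x x' assms by metis
  next
    case False then show ?thesis using disj_aux[of l' l x' x k' k] x x' assms by auto
  qed
  moreover have "R k \<inter> R k' = {} \<or> k = k'" unfolding R_def by auto
  ultimately show ?thesis using x x' by auto
qed

lemma Y_E_disj: "0 < j \<Longrightarrow> j < k \<Longrightarrow> Y T E k j \<inter> E = {}"
  unfolding Y_eq using R_char by auto

end


context dyn
begin

definition Wset :: "(nat \<Rightarrow> 'a set) \<Rightarrow> nat \<Rightarrow> 'a set" where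
  "Wset Z k = E \<inter> (\<Inter>j\<in>{1..<k}. (T ^^ j) -` Z j) \<inter> (T ^^ k) -` E"

lemma Vk_eq: "Vk T E P k = {W. W \<noteq> {} \<and> 1 \<le> k \<and> (\<exists>Z. (\<forall>j\<in>{1..<k}. Z j \<in> P) \<and> W = Wset Z k)}"
  unfolding Vk_def Wset_def by simp

lemma Wset_sub:
  assumes "\<forall>j\<in>{1..<k}. Z j \<in> P" "1 \<le> k"
  shows "Wset Z k \<subseteq> R k"
proof
  fix x assume x: "x \<in> Wset Z k"
  have "\<forall>j. 0 < j \<and> j < k \<longrightarrow> (T^^j) x \<notin> E"
  proof (intro allI impI)
    fix j assume j: "0 < j \<and> j < k"
    then have "(T^^j) x \<in> Z j" "Z j \<in> P" using x assms unfolding Wset_def by auto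
    then show "(T^^j) x \<notin> E" using P_subE by blast
  qed
  then show "x \<in> R k" using x assms unfolding Wset_def R_char by auto
qed

lemma Wset_clopen: "\<forall>j\<in>{1..<k}. Z j \<in> P \<Longrightarrow> clopen (Wset Z k)"
proof -
  assume a: "\<forall>j\<in>{1..<k}. Z j \<in> P"
  have c: "clopen ((T ^^ j) -` Z j)" if "j \<in> {1..<k}" for j
    using clopen_vimage_Tn P_clopen a that by blast
  have "open (\<Inter>j\<in>{1..<k}. (T ^^ j) -` Z j)" using c unfolding clopen_def by (intro open_INT) auto
  moreover have "closed (\<Inter>j\<in>{1..<k}. (T ^^ j) -` Z j)" using c unfolding clopen_def by (intro closed_INT) auto
  moreover have "clopen ((T ^^ k) -` E)" using clopen_vimage_Tn E_clopen by blast
  ultimately show ?thesis using E_clopen unfolding Wset_def clopen_def by auto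
qed

lemma Wset_cong: "(\<forall>j\<in>{1..<k}. Z j = Z' j) \<Longrightarrow> Wset Z k = Wset Z' k"
  unfolding Wset_def by auto

lemma Vk_finite: "finite (Vk T E P k)"
proof -
  have "Vk T E P k \<subseteq> (\<lambda>Z. Wset Z k) ` ({1..<k} \<rightarrow>\<^sub>E P)"
  proof
    fix W assume "W \<in> Vk T E P k"
    then obtain Z where Z: "\<forall>j\<in>{1..<k}. Z j \<in> P" "W = Wset Z k" unfolding Vk_eq by auto
    have "restrict Z {1..<k} \<in> {1..<k} \<rightarrow>\<^sub>E P" using Z by auto
    moreover have "Wset (restrict Z {1..<k}) k = W" using Z Wset_cong[of k "restrict Z {1..<k}" Z] by auto
    ultimately show "W \<in> (\<lambda>Z. Wset Z k) ` ({1..<k} \<rightarrow>\<^sub>E P)" by blast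
  qed
  moreover have "finite ({1..<k} \<rightarrow>\<^sub>E P)" using P_fin by (intro finite_PiE) auto
  ultimately show ?thesis by (meson finite_imageI finite_subset)
qed

lemma Wset_disj:
  assumes "\<forall>j\<in>{1..<k}. Z j \<in> P" "\<forall>j\<in>{1..<k}. Z' j \<in> P" "x \<in> Wset Z k" "x \<in> Wset Z' k"
  shows "Wset Z k = Wset Z' k"
proof (rule Wset_cong, intro ballI)
  fix j assume j: "j \<in> {1..<k}"
  then have "(T^^j) x \<in> Z j \<inter> Z' j" using assms(3,4) unfolding Wset_def by auto
  then show "Z j = Z' j" using P_disj assms(1,2) j by blast
qed

lemma Vk_sub: "W \<in> Vk T E P k \<Longrightarrow> W \<subseteq> R k"
  unfolding Vk_eq using Wset_sub by blast

lemma Vk_cover: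
  assumes "x \<in> R k"
  shows "\<exists>W\<in>Vk T E P k. x \<in> W"
proof -
  have k: "1 \<le> k" using assms R_char by auto
  have ex: "\<exists>Z. Z \<in> P \<and> (T^^j) x \<in> Z" if "j \<in> {1..<k}" for j
  proof -
    have "(T^^j) x \<notin> E" using assms that R_char by auto
    then show ?thesis using P_Un by blast
  qed
  define Z where "Z j = (SOME Z. Z \<in> P \<and> (T^^j) x \<in> Z)" for j
  have Z: "Z j \<in> P \<and> (T^^j) x \<in> Z j" if "j \<in> {1..<k}" for j
    using someI_ex[OF ex[OF that]] unfolding Z_def by blast
  have "x \<in> Wset Z k" using Z assms R_char unfolding Wset_def by auto
  then show ?thesis using Z k unfolding Vk_eq by blast
qed

lemma Vk_partition: "1 \<le> k \<Longrightarrow> partition_of (Y T E k 0) (Vk T E P k)"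
proof -
  assume k: "1 \<le> k"
  have "\<forall>A\<in>Vk T E P k. A \<noteq> {} \<and> clopen A" unfolding Vk_eq using Wset_clopen by auto
  moreover have "\<forall>A\<in>Vk T E P k. \<forall>B\<in>Vk T E P k. A \<noteq> B \<longrightarrow> A \<inter> B = {}"
    unfolding Vk_eq using Wset_disj by blast
  moreover have "\<Union>(Vk T E P k) = Y T E k 0"
    unfolding Y0 using Vk_sub Vk_cover by blast
  ultimately show ?thesis using Vk_finite unfolding partition_of_def by auto
qed

lemma Pbar_mem: "Zb \<in> Pbar T E P \<longleftrightarrow> (\<exists>W k l. k \<ge> 1 \<and> W \<in> Vk T E P k \<and> l < k \<and> Zb = (T^^l) ` W)"
  unfolding Pbar_def by blast

lemma Pbar_sub_Y: "W \<in> Vk T E P k \<Longrightarrow> (T^^l) ` W \<subseteq> Y T E k l"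
  unfolding Y_eq using Vk_sub by auto

lemma Pbar_countable: "countable (Pbar T E P)"
proof -
  have "Pbar T E P = (\<Union>k. \<Union>l. (\<lambda>W. (T^^l) ` W) ` {W. k \<ge> 1 \<and> W \<in> Vk T E P k \<and> l < k})"
    unfolding Pbar_def by blast
  moreover have "countable ((\<lambda>W. (T^^l) ` W) ` {W. k \<ge> 1 \<and> W \<in> Vk T E P k \<and> l < k})" for k l
    by (rule countable_image, rule countable_finite, rule finite_subset[OF _ Vk_finite[of k]]) auto
  ultimately show ?thesis by auto
qed

lemma Pbar_ne_clopen: "Zb \<in> Pbar T E P \<Longrightarrow> Zb \<noteq> {} \<and> clopen Zb"
  unfolding Pbar_mem Vk_eq using Wset_clopen clopen_image_Tn by blast

lemma Pbar_disj:
  assumes "A \<in> Pbar T E P" "B \<in> Pbar T E P" "A \<noteq> B"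
  shows "A \<inter> B = {}"
proof (rule ccontr)
  assume ne: "A \<inter> B \<noteq> {}"
  obtain W k l where W: "k \<ge> 1" "W \<in> Vk T E P k" "l < k" "A = (T^^l) ` W" using assms(1) Pbar_mem by auto
  obtain W' k' l' where W': "k' \<ge> 1" "W' \<in> Vk T E P k'" "l' < k'" "B = (T^^l') ` W'" using assms(2) Pbar_mem by auto
  obtain y where y: "y \<in> A" "y \<in> B" using ne by auto
  have "k = k' \<and> l = l'" using Y_disj[of y k l k' l'] y W W' Pbar_sub_Y by blast
  then have kk: "k' = k" "l' = l" by auto
  obtain x x' where "x \<in> W" "x' \<in> W'" "y = (T^^l) x" "y = (T^^l) x'" using y W W' kk by auto
  then have "x \<in> W \<inter> W'" by simp
  then have "W = W'" using W(2) W'(2) kk unfolding Vk_eq using Wset_disj by blast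
  then show False using assms(3) W W' kk by simp
qed

lemma Pbar_finer_PE: "finer (Pbar T E P) (P \<union> {E})"
  unfolding finer_def
proof
  fix A assume "A \<in> Pbar T E P"
  then obtain W k l where W: "k \<ge> 1" "W \<in> Vk T E P k" "l < k" "A = (T^^l) ` W" using Pbar_mem by auto
  then obtain Z where Z: "\<forall>j\<in>{1..<k}. Z j \<in> P" "W = Wset Z k" unfolding Vk_eq by auto
  show "\<exists>B\<in>P \<union> {E}. A \<subseteq> B"
  proof (cases "l = 0")
    case True then show ?thesis using W Z unfolding Wset_def by auto
  next
    case False
    then have "A \<subseteq> Z l" using W Z unfolding Wset_def by auto
    then show ?thesis using Z W False by auto
  qed
qed

lemma Pbar_finer_Y: "finer (Pbar T E P) (Ysets T E)"
  unfolding finer_def Ysets_def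
proof
  fix A assume "A \<in> Pbar T E P"
  then obtain W k l where W: "k \<ge> 1" "W \<in> Vk T E P k" "l < k" "A = (T^^l) ` W" using Pbar_mem by auto
  then have "A \<subseteq> Y T E k l" using Pbar_sub_Y by simp
  moreover have "A \<noteq> {}" using Pbar_ne_clopen \<open>A \<in> Pbar T E P\<close> by blast
  ultimately have ne: "Y T E k l \<noteq> {}" by blast
  have "Y T E k l \<in> {Y T E k l |k l. l < k \<and> Y T E k l \<noteq> {}}" using ne W(3) by blast
  then show "\<exists>B\<in>{Y T E k l |k l. l < k \<and> Y T E k l \<noteq> {}}. A \<subseteq> B" using \<open>A \<subseteq> Y T E k l\<close> by (rule bexI[rotated])
qed

lemma Pbar_orbit: "orbit_closed T E (Pbar T E P)"
  unfolding orbit_closed_def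
proof (intro ballI allI impI)
  fix Zb k i assume Zb: "Zb \<in> Pbar T E P" and sub: "Zb \<subseteq> Y T E k 0" and i: "1 \<le> i \<and> i \<le> k - 1"
  obtain W k' l where W: "k' \<ge> 1" "W \<in> Vk T E P k'" "l < k'" "Zb = (T^^l) ` W" using Zb Pbar_mem by auto
  obtain y where y: "y \<in> Zb" using Pbar_ne_clopen Zb by auto
  have yk: "y \<in> Y T E k 0" using sub y by blast
  then have "0 < k" unfolding Y0 using R_char by blast
  have "y \<in> Y T E k' l" using Pbar_sub_Y[OF W(2), of l] W(4) y by blast
  then have "k' = k \<and> l = 0" using Y_disj[of y k' l k 0] yk W(3) \<open>0 < k\<close> by blast
  then have "Zb = W" "W \<in> Vk T E P k" using W by auto
  moreover have "i < k" using i \<open>0 < k\<close> by linarith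
  ultimately show "(T ^^ i) ` Zb \<in> Pbar T E P" using i \<open>0 < k\<close> unfolding Pbar_mem
    by (intro exI[of _ W] exI[of _ k] exI[of _ i]) auto
qed

end


lemma cont_pow: "continuous_on UNIV (S::'a::topological_space \<Rightarrow> 'a) \<Longrightarrow> continuous_on UNIV (S^^n)"
proof (induction n)
  case 0
  have "S^^0 = (\<lambda>x. x)" by (rule ext) simp
  then show ?case by (simp add: continuous_on_id)
next
  case (Suc n)
  have "continuous_on UNIV (\<lambda>x. S ((S^^n) x))"
    by (rule continuous_on_compose2[OF Suc.prems Suc.IH[OF Suc.prems]]) auto
  then show ?case by (simp add: o_def)
qed

lemma fSuc': "(f^^Suc n) y = (f^^n) (f y)"
  by (simp only: funpow_Suc_right comp_apply)

lemma recurrence: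
  fixes S :: "'a::topological_space \<Rightarrow> 'a" and \<mu> :: "'a measure"
  assumes prob: "prob_space \<mu>" and sets: "sets \<mu> = sets borel"
    and contS: "continuous_on UNIV S"
    and inv: "\<And>A. A \<in> sets borel \<Longrightarrow> measure \<mu> (S -` A) = measure \<mu> A"
    and erg: "\<And>A. A \<in> sets borel \<Longrightarrow> S -` A = A \<Longrightarrow> measure \<mu> A = 0 \<or> measure \<mu> A = 1"
    and E: "open E" "measure \<mu> E > 0"
  shows "measure \<mu> (\<Union>n\<in>{1..}. (S^^n) -` E) = 1"
proof -
  interpret prob_space \<mu> by fact
  define G where "G m = (\<Union>n\<in>{m..}. (S^^n) -` E)" for m
  have Gopen: "open (G m)" for m
    unfolding G_def using cont_pow[OF contS] E(1) by (intro open_UN ballI open_vimage) auto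
  then have Gsets: "G m \<in> sets \<mu>" for m using sets by simp
  have vG: "S -` G m = G (Suc m)" for m
  proof (rule set_eqI)
    fix x
    show "x \<in> S -` G m \<longleftrightarrow> x \<in> G (Suc m)"
    proof
      assume "x \<in> S -` G m"
      then obtain n where "n \<ge> m" "(S^^n) (S x) \<in> E" unfolding G_def by auto
      moreover have "(S^^Suc n) x \<in> E" using \<open>(S^^n) (S x) \<in> E\<close> by (simp only: fSuc')
      ultimately show "x \<in> G (Suc m)" unfolding G_def by (intro UN_I[of "Suc n"]) auto
    next
      assume "x \<in> G (Suc m)"
      then obtain n where n: "n \<ge> Suc m" "(S^^n) x \<in> E" unfolding G_def by auto
      then obtain n' where "n = Suc n'" by (cases n) auto
      moreover have "(S^^n') (S x) \<in> E" using n \<open>n = Suc n'\<close> by (simp only: fSuc'[symmetric])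
      ultimately show "x \<in> S -` G m" unfolding G_def using n by (intro vimageI2 UN_I[of n']) auto
    qed
  qed
  have mG: "measure \<mu> (G m) = measure \<mu> (G 0)" for m
  proof (induction m)
    case (Suc m)
    have "measure \<mu> (G (Suc m)) = measure \<mu> (S -` G m)" using vG by simp
    also have "\<dots> = measure \<mu> (G m)" using inv Gopen by simp
    finally show ?case using Suc by simp
  qed simp
  have dec: "decseq G" unfolding decseq_def G_def by (intro allI impI UN_mono) auto
  define H where "H = (\<Inter>m. G m)"
  have "(\<lambda>m. measure \<mu> (G m)) \<longlonglongrightarrow> measure \<mu> H"
    unfolding H_def using Gsets dec by (intro finite_Lim_measure_decseq) auto
  moreover have "(\<lambda>m. measure \<mu> (G m)) = (\<lambda>m. measure \<mu> (G 0))" by (rule ext) (rule mG)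
  ultimately have "(\<lambda>m. measure \<mu> (G 0)) \<longlonglongrightarrow> measure \<mu> H" by simp
  then have mH: "measure \<mu> H = measure \<mu> (G 0)" by (simp add: LIMSEQ_const_iff)
  have Hsets: "H \<in> sets borel" unfolding H_def using Gopen by auto
  have "S -` H = (\<Inter>m. G (Suc m))" unfolding H_def by (simp add: vimage_INT vG)
  also have "\<dots> = H"
  proof
    show "(\<Inter>m. G (Suc m)) \<subseteq> H" unfolding H_def using decseq_SucD[OF dec] by blast
    show "H \<subseteq> (\<Inter>m. G (Suc m))" unfolding H_def by blast
  qed
  finally have vH: "S -` H = H" .
  have "E \<subseteq> G 0"
  proof
    fix x assume "x \<in> E"
    then have "(S^^0) x \<in> E" by simp
    then show "x \<in> G 0" unfolding G_def by blast
  qed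
  then have "measure \<mu> (G 0) \<ge> measure \<mu> E" using Gsets by (intro finite_measure_mono) auto
  then have "measure \<mu> H = 1" using erg[OF Hsets vH] mH E(2) by auto
  moreover have "H \<subseteq> G 1" unfolding H_def by auto
  then have "measure \<mu> H \<le> measure \<mu> (G 1)" using Gsets by (intro finite_measure_mono) auto
  ultimately have "measure \<mu> (G 1) \<ge> 1" by linarith
  moreover have "measure \<mu> (G 1) \<le> 1" by simp
  ultimately show ?thesis unfolding G_def by linarith
qed

context dyn
begin

lemma cover:
  assumes y1: "(T^^n) y \<in> E" "1 \<le> n" and y2: "(Tinv^^j0) y \<in> E"
  shows "y \<in> \<Union>(Pbar T E P)"
proof -
  define j where "j = (LEAST j. (Tinv^^j) y \<in> E)"
  have jE: "(Tinv^^j) y \<in> E" unfolding j_def using y2 by (rule LeastI)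
  have jmin: "i < j \<Longrightarrow> (Tinv^^i) y \<notin> E" for i unfolding j_def using not_less_Least by blast
  define x where "x = (Tinv^^j) y"
  have yx: "y = (T^^j) x" unfolding x_def by simp
  have notE: "(T^^i) x \<notin> E" if "0 < i" "i \<le> j" for i
  proof -
    have "(Tinv^^j) y = (Tinv^^i) ((Tinv^^(j-i)) y)"
      using that by (metis funpow_add le_add_diff_inverse o_apply)
    then have "(T^^i) x = (Tinv^^(j-i)) y" unfolding x_def by simp
    then show ?thesis using jmin that by simp
  qed
  have "(T^^(n+j)) x = (T^^n) y" using yx by (simp add: funpow_add)
  then have ret: "returns T E x" unfolding returns_def using y1 by (intro exI[of _ "n+j"]) auto
  define k where "k = r_E T E x"
  have "j < k"
  proof (rule ccontr)
    assume "\<not> j < k"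
    then show False using r_E_props[OF ret] notE unfolding k_def by auto
  qed
  have "x \<in> R k" unfolding R_def k_def using ret jE x_def by auto
  then obtain W where W: "W \<in> Vk T E P k" "x \<in> W" using Vk_cover by blast
  have "(T^^j) ` W \<in> Pbar T E P" unfolding Pbar_mem using W \<open>j < k\<close>
    by (intro exI[of _ W] exI[of _ k] exI[of _ j]) auto
  then show ?thesis using W yx by blast
qed

lemma coarsest:
  assumes prob: "prob_space \<mu>" and sets: "sets \<mu> = sets borel" and full: "full_measure \<mu>"
    and Q: "quasi_partition \<mu> Q" and f1: "finer Q (P \<union> {E})" and f2: "finer Q (Ysets T E)"
    and oc: "orbit_closed T E Q"
  shows "finer Q (Pbar T E P)"
  unfolding finer_def
proof
  interpret prob_space \<mu> by fact
  have Qne: "\<And>A. A \<in> Q \<Longrightarrow> A \<noteq> {} \<and> clopen A"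
    and Qdisj: "\<And>A B. A \<in> Q \<Longrightarrow> B \<in> Q \<Longrightarrow> A \<noteq> B \<Longrightarrow> A \<inter> B = {}"
    and QU: "measure \<mu> (\<Union>Q) = 1"
    using Q unfolding quasi_partition_def by auto
  have QY: "\<And>A. A \<in> Q \<Longrightarrow> \<exists>k l. l < k \<and> A \<subseteq> Y T E k l"
    using f2 unfolding finer_def Ysets_def by blast
  have QO: "\<And>B k i. B \<in> Q \<Longrightarrow> B \<subseteq> Y T E k 0 \<Longrightarrow> 1 \<le> i \<Longrightarrow> i \<le> k - 1 \<Longrightarrow> (T^^i) ` B \<in> Q"
    using oc unfolding orbit_closed_def by blast
  fix A assume A: "A \<in> Q"
  obtain k l where kl: "l < k" "A \<subseteq> Y T E k l" using QY[OF A] by blast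
  obtain a where a: "a \<in> A" using Qne[OF A] by auto
  define A' where "A' = (T^^l) -` A"
  have "open A" using Qne[OF A] unfolding clopen_def by simp
  then have oA': "open A'" unfolding A'_def using cont_Tn open_vimage by blast
  have "(Tinv^^l) a \<in> A'" unfolding A'_def using a by simp
  then have pos: "measure \<mu> A' > 0" using full oA' unfolding full_measure_def by blast
  have oQ: "open (\<Union>Q)" using Qne unfolding clopen_def by auto
  have "\<exists>B\<in>Q. B \<inter> A' \<noteq> {}"
  proof (rule ccontr)
    assume "\<not> ?thesis"
    then have "\<Union>Q \<inter> A' = {}" by auto
    then have "measure \<mu> (\<Union>Q \<union> A') = measure \<mu> (\<Union>Q) + measure \<mu> A'"
      using oQ oA' sets by (intro finite_measure_Union) auto
    then have "measure \<mu> (\<Union>Q \<union> A') > 1" using QU pos by simp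
    then show False using prob_le_1 not_le by blast
  qed
  then obtain B b where B: "B \<in> Q" "b \<in> B" "b \<in> A'" by blast
  have "(T^^l) b \<in> Y T E k l" using B(3) kl unfolding A'_def by auto
  then have bR: "b \<in> R k" unfolding Y_eq by auto
  then have k0: "0 < k" using R_char by blast
  obtain k' l' where kl': "l' < k'" "B \<subseteq> Y T E k' l'" using QY[OF B(1)] by blast
  have "k' = k \<and> l' = 0" using Y_disj[of b k' l' k 0] bR kl' B(2) k0 unfolding Y0 by blast
  then have BY: "B \<subseteq> Y T E k 0" using kl' by simp
  have TlB: "(T^^l) ` B \<in> Q"
  proof (cases "l = 0")
    case True then show ?thesis using B by simp
  next
    case False then show ?thesis using QO[OF B(1) BY, of l] kl by simp
  qed
  have "(T^^l) b \<in> (T^^l) ` B \<inter> A" using B unfolding A'_def by auto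
  then have AB: "A = (T^^l) ` B" using Qdisj[OF TlB A] by blast
  have exZ: "\<exists>C. C \<in> P \<and> (T^^j) ` B \<subseteq> C" if j: "j \<in> {1..<k}" for j
  proof -
    have inQ: "(T^^j) ` B \<in> Q" using QO[OF B(1) BY, of j] j by auto
    then obtain C where C: "C \<in> P \<union> {E}" "(T^^j) ` B \<subseteq> C" using f1 unfolding finer_def by blast
    have "(T^^j) ` B \<subseteq> Y T E k j" using BY unfolding Y_eq Y0 by auto
    moreover have "(T^^j) ` B \<noteq> {}" using B by auto
    ultimately have "\<not> (T^^j) ` B \<subseteq> E" using Y_E_disj[of j k] j by auto
    then show ?thesis using C by auto
  qed
  define Z where "Z j = (SOME C. C \<in> P \<and> (T^^j) ` B \<subseteq> C)" for j
  have Z: "Z j \<in> P \<and> (T^^j) ` B \<subseteq> Z j" if "j \<in> {1..<k}" for j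
    using someI_ex[OF exZ[OF that]] unfolding Z_def by blast
  have BW: "B \<subseteq> Wset Z k"
  proof
    fix x assume x: "x \<in> B"
    then have "x \<in> R k" using BY Y0 by auto
    moreover have "\<forall>j\<in>{1..<k}. (T^^j) x \<in> Z j" using Z x by blast
    ultimately show "x \<in> Wset Z k" unfolding Wset_def R_char by auto
  qed
  then have "Wset Z k \<in> Vk T E P k" unfolding Vk_eq mem_Collect_eq using Z B(2) k0
    by (intro conjI exI[of _ Z]) auto
  then have "(T^^l) ` Wset Z k \<in> Pbar T E P" unfolding Pbar_mem using kl k0
    by (intro exI[of _ "Wset Z k"] exI[of _ k] exI[of _ l]) auto
  moreover have "A \<subseteq> (T^^l) ` Wset Z k" using AB BW by auto
  ultimately show "\<exists>B\<in>Pbar T E P. A \<subseteq> B" by blast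
qed

end


definition mono_cp :: "('a \<Rightarrow> 'k::zero) \<Rightarrow> int \<Rightarrow> ('a, 'k) cp" where
  "mono_cp f m = (\<lambda>n. if n = m then f else (\<lambda>_. 0))"

lemma cp_fun_mono: "cp_fun f = mono_cp f 0"
  unfolding cp_fun_def mono_cp_def by (auto simp: fun_eq_iff)

lemma cp_chi_t_mono: "cp_chi_t Z = mono_cp (chi Z) 1"
  unfolding cp_chi_t_def mono_cp_def chi_def by (auto simp: fun_eq_iff)

lemma cp_one_mono: "cp_one = mono_cp (chi UNIV) 0"
  unfolding cp_one_def mono_cp_def chi_def by (auto simp: fun_eq_iff)

lemma mult_mono_cp:
  "cp_mult T Tinv (mono_cp f i) (mono_cp g j) = mono_cp (\<lambda>x. f x * g (Tz T Tinv (-i) x)) (i+j)"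
proof (cases "f = (\<lambda>_. 0)")
  case True
  have "{i'. mono_cp f i i' \<noteq> (\<lambda>_. 0)} = {}" unfolding mono_cp_def using True by auto
  then show ?thesis unfolding cp_mult_def using True by (auto simp: mono_cp_def fun_eq_iff)
next
  case False
  have "{i'. mono_cp f i i' \<noteq> (\<lambda>_. 0)} = {i}" unfolding mono_cp_def using False by auto
  then show ?thesis unfolding cp_mult_def by (auto simp: mono_cp_def fun_eq_iff)
qed

lemma add_mono_cp: "cp_add (mono_cp f m) (mono_cp (g :: 'a \<Rightarrow> 'k::comm_ring_1) m) = mono_cp (\<lambda>x. f x + g x) m"
  unfolding cp_add_def mono_cp_def by (auto simp: fun_eq_iff)

lemma smult_mono_cp: "cp_smult c (mono_cp (f :: 'a \<Rightarrow> 'k::comm_ring_1) m) = mono_cp (\<lambda>x. c * f x) m"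
  unfolding cp_smult_def mono_cp_def by (auto simp: fun_eq_iff)

lemma star_mono_cp: "invol 0 = 0 \<Longrightarrow> cp_star T Tinv invol (mono_cp f i) = mono_cp (\<lambda>x. invol (f (Tz T Tinv i x))) (-i)"
  unfolding cp_star_def mono_cp_def by (auto simp: fun_eq_iff)

lemma invol_01:
  assumes "field_involution (invol :: 'k::field \<Rightarrow> 'k)"
  shows "invol 0 = 0" "invol 1 = 1"
proof -
  have a: "\<And>a b. invol (a + b) = invol a + invol b" "\<And>a b. invol (a * b) = invol a * invol b"
    "\<And>a. invol (invol a) = a" using assms unfolding field_involution_def by auto
  have "invol 0 = invol 0 + invol 0" using a(1)[of 0 0] by simp
  then show z: "invol 0 = 0" by (metis add_cancel_right_right)
  have "invol 1 = invol 1 * invol 1" using a(2)[of 1 1] by simp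
  then have "invol 1 = 0 \<or> invol 1 = 1"
    by (metis mult_cancel_right1 mult_zero_left)
  moreover have "invol 1 \<noteq> 0" using a(3)[of 1] z by auto
  ultimately show "invol 1 = 1" by simp
qed

lemma Tz1[simp]: "Tz T Tinv 1 x = T x" by (simp add: Tz_def)
lemma Tzm1[simp]: "Tz T Tinv (-1) x = Tinv x" by (simp add: Tz_def)
lemma Tz0[simp]: "Tz T Tinv 0 x = x" by (simp add: Tz_def)

context
  fixes T Tinv :: "'a \<Rightarrow> 'a" and invol :: "'k::field \<Rightarrow> 'k" and P :: "'a set set"
  assumes TT: "\<And>x. T (Tinv x) = x" and TT2: "\<And>x. Tinv (T x) = x"
    and inv: "field_involution invol"
begin

definition DD :: "'a set \<Rightarrow> bool" where
  "DD S \<longleftrightarrow> mono_cp (chi S :: 'a \<Rightarrow> 'k) 0 \<in> Bsub T Tinv invol P"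

lemma DD_UNIV: "DD UNIV"
  unfolding DD_def cp_one_mono[symmetric] by (rule Bsub.one)

lemma DD_Int: "DD A \<Longrightarrow> DD B \<Longrightarrow> DD (A \<inter> B)"
proof -
  assume "DD A" "DD B"
  then have "cp_mult T Tinv (mono_cp (chi A :: 'a \<Rightarrow> 'k) 0) (mono_cp (chi B) 0) \<in> Bsub T Tinv invol P"
    unfolding DD_def by (rule Bsub.mult)
  moreover have "cp_mult T Tinv (mono_cp (chi A :: 'a \<Rightarrow> 'k) 0) (mono_cp (chi B) 0) = mono_cp (chi (A \<inter> B)) 0"
    unfolding mult_mono_cp by (simp add: chi_def mono_cp_def fun_eq_iff)
  ultimately show ?thesis unfolding DD_def by simp
qed

lemma DD_compl: "DD A \<Longrightarrow> DD (- A)"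
proof -
  assume "DD A"
  then have "cp_add cp_one (cp_smult (-1) (mono_cp (chi A :: 'a \<Rightarrow> 'k) 0)) \<in> Bsub T Tinv invol P"
    unfolding DD_def by (intro Bsub.add Bsub.one Bsub.smult)
  moreover have "cp_add cp_one (cp_smult (-1) (mono_cp (chi A :: 'a \<Rightarrow> 'k) 0)) = mono_cp (chi (- A)) 0"
    unfolding cp_one_mono smult_mono_cp add_mono_cp by (simp add: chi_def mono_cp_def fun_eq_iff)
  ultimately show ?thesis unfolding DD_def by simp
qed

lemma DD_Un: "DD A \<Longrightarrow> DD B \<Longrightarrow> DD (A \<union> B)"
proof -
  assume "DD A" "DD B"
  then have "DD (- (- A \<inter> - B))" by (intro DD_compl DD_Int)
  then show ?thesis by simp
qed

lemma DD_empty: "DD {}"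
  using DD_compl[OF DD_UNIV] by simp

lemma DD_pull: "Z \<in> P \<Longrightarrow> DD S \<Longrightarrow> DD (T -` (Z \<inter> S))"
proof -
  assume Z: "Z \<in> P" and S: "DD S"
  have g: "cp_chi_t Z \<in> Bsub T Tinv invol P" using Z by (rule Bsub.gen)
  have "cp_mult T Tinv (cp_mult T Tinv (cp_star T Tinv invol (cp_chi_t Z)) (mono_cp (chi S :: 'a \<Rightarrow> 'k) 0)) (cp_chi_t Z)
      \<in> Bsub T Tinv invol P"
    using S g unfolding DD_def by (intro Bsub.mult Bsub.star)
  moreover have "cp_mult T Tinv (cp_mult T Tinv (cp_star T Tinv invol (cp_chi_t Z)) (mono_cp (chi S :: 'a \<Rightarrow> 'k) 0)) (cp_chi_t Z)
      = mono_cp (chi (T -` (Z \<inter> S))) 0"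
    unfolding cp_chi_t_mono star_mono_cp[where invol=invol, OF invol_01(1)[OF inv]] mult_mono_cp
    by (simp add: chi_def mono_cp_def fun_eq_iff invol_01[OF inv])
  ultimately show ?thesis unfolding DD_def by simp
qed

lemma DD_push: "Z \<in> P \<Longrightarrow> DD S \<Longrightarrow> DD (Z \<inter> Tinv -` S)"
proof -
  assume Z: "Z \<in> P" and S: "DD S"
  have g: "cp_chi_t Z \<in> Bsub T Tinv invol P" using Z by (rule Bsub.gen)
  have "cp_mult T Tinv (cp_mult T Tinv (cp_chi_t Z) (mono_cp (chi S :: 'a \<Rightarrow> 'k) 0)) (cp_star T Tinv invol (cp_chi_t Z))
      \<in> Bsub T Tinv invol P"
    using S g unfolding DD_def by (intro Bsub.mult Bsub.star)
  moreover have "cp_mult T Tinv (cp_mult T Tinv (cp_chi_t Z) (mono_cp (chi S :: 'a \<Rightarrow> 'k) 0)) (cp_star T Tinv invol (cp_chi_t Z))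
      = mono_cp (chi (Z \<inter> Tinv -` S)) 0"
    unfolding cp_chi_t_mono star_mono_cp[where invol=invol, OF invol_01(1)[OF inv]] mult_mono_cp
    by (simp add: chi_def mono_cp_def fun_eq_iff invol_01[OF inv] TT)
  ultimately show ?thesis unfolding DD_def by simp
qed

lemma DD_Z: "Z \<in> P \<Longrightarrow> DD Z"
  using DD_push[OF _ DD_UNIV] by simp

lemma DD_Union: "finite F \<Longrightarrow> F \<subseteq> P \<Longrightarrow> DD (\<Union>F)"
  by (induction F rule: finite_induct) (auto intro: DD_empty DD_Un DD_Z)

lemma DD_UnionT: "finite F \<Longrightarrow> F \<subseteq> P \<Longrightarrow> DD (\<Union>Z\<in>F. T -` Z)"
proof (induction F rule: finite_induct)
  case empty then show ?case using DD_empty by simp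
next
  case (insert Z F)
  then have "DD (T -` (Z \<inter> UNIV))" using DD_pull DD_UNIV by blast
  then show ?case using insert DD_Un by simp
qed

end


context dyn
begin

context
  fixes invol :: "'k::field \<Rightarrow> 'k"
  assumes inv: "field_involution invol"
begin

abbreviation "DDk \<equiv> DD T Tinv invol P"

lemmas DDI = DD_Int[OF TT TT2 inv] DD_compl[OF TT TT2 inv] DD_Un[OF TT TT2 inv]
  DD_pull[OF TT TT2 inv] DD_push[OF TT TT2 inv] DD_Union[OF TT TT2 inv] DD_UnionT[OF TT TT2 inv]

lemma DD_E: "DDk E"
proof -
  have "DDk (\<Union>P)" using DDI(6) P_fin by blast
  then have "DDk (- \<Union>P)" using DDI(2) by blast
  moreover have "- \<Union>P = E" using P_Un by auto
  ultimately show ?thesis by simp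
qed

lemma DD_TE: "DDk (T -` E)"
proof -
  have "DDk (\<Union>Z\<in>P. T -` Z)" using DDI(7) P_fin by blast
  then have "DDk (- (\<Union>Z\<in>P. T -` Z))" using DDI(2) by blast
  moreover have "- (\<Union>Z\<in>P. T -` Z) = T -` E" using P_Un by auto
  ultimately show ?thesis by simp
qed

lemma DD_chain: "(\<forall>j<n. Z j \<in> P) \<Longrightarrow> DDk {x. (\<forall>j<n. (T^^(Suc j)) x \<in> Z j) \<and> (T^^(Suc n)) x \<in> E}"
proof (induction n arbitrary: Z)
  case 0
  have "{x. (\<forall>j<0. (T^^(Suc j)) x \<in> Z j) \<and> (T^^(Suc 0)) x \<in> E} = T -` E" by auto
  then show ?case using DD_TE by simp
next
  case (Suc n)
  have IH: "DDk {x. (\<forall>j<n. (T^^(Suc j)) x \<in> Z (Suc j)) \<and> (T^^(Suc n)) x \<in> E}"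
    using Suc.IH[of "\<lambda>j. Z (Suc j)"] Suc.prems by auto
  have "DDk (T -` (Z 0 \<inter> {x. (\<forall>j<n. (T^^(Suc j)) x \<in> Z (Suc j)) \<and> (T^^(Suc n)) x \<in> E}))"
    using DDI(4)[OF _ IH] Suc.prems by auto
  moreover have "T -` (Z 0 \<inter> {x. (\<forall>j<n. (T^^(Suc j)) x \<in> Z (Suc j)) \<and> (T^^(Suc n)) x \<in> E})
     = {x. (\<forall>j<Suc n. (T^^(Suc j)) x \<in> Z j) \<and> (T^^(Suc (Suc n))) x \<in> E}"
  proof -
    show ?thesis by (auto simp: less_Suc_eq_0_disj funpow_swap1)
  qed
  ultimately show ?case by simp
qed

lemma DD_Wset:
  assumes "\<forall>j\<in>{1..<k}. Z j \<in> P" "1 \<le> k"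
  shows "DDk (Wset Z k)"
proof -
  have c: "DDk {x. (\<forall>j<k-1. (T^^(Suc j)) x \<in> Z (Suc j)) \<and> (T^^(Suc (k-1))) x \<in> E}"
    using assms by (intro DD_chain) auto
  have "Wset Z k = E \<inter> {x. (\<forall>j<k-1. (T^^(Suc j)) x \<in> Z (Suc j)) \<and> (T^^(Suc (k-1))) x \<in> E}"
  proof -
    have kk: "Suc (k-1) = k" using assms by simp
    have Qeq: "(\<forall>j\<in>{1..<k}. Q j) \<longleftrightarrow> (\<forall>j<k-1. Q (Suc j))" for Q :: "nat \<Rightarrow> bool"
    proof
      assume "\<forall>j\<in>{1..<k}. Q j" then show "\<forall>j<k-1. Q (Suc j)" by auto
    next
      assume a: "\<forall>j<k-1. Q (Suc j)"
      show "\<forall>j\<in>{1..<k}. Q j"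
      proof
        fix j assume "j \<in> {1..<k}"
        then obtain i where "j = Suc i" "i < k - 1" by (cases j) auto
        then show "Q j" using a by simp
      qed
    qed
    show ?thesis
    proof (rule set_eqI)
      fix x
      have a: "x \<in> Wset Z k \<longleftrightarrow> x \<in> E \<and> (\<forall>j\<in>{1..<k}. (T^^j) x \<in> Z j) \<and> (T^^k) x \<in> E"
        unfolding Wset_def by blast
      have b: "(\<forall>j\<in>{1..<k}. (T^^j) x \<in> Z j) \<longleftrightarrow> (\<forall>j<k-1. (T^^(Suc j)) x \<in> Z (Suc j))"
        by (rule Qeq)
      show "x \<in> Wset Z k \<longleftrightarrow> x \<in> E \<inter> {x. (\<forall>j<k-1. (T^^(Suc j)) x \<in> Z (Suc j)) \<and> (T^^(Suc (k-1))) x \<in> E}"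
        unfolding a b by (simp only: Int_iff mem_Collect_eq kk)
    qed
  qed
  then show ?thesis using DDI(1)[OF DD_E c] by simp
qed

lemma DD_image:
  assumes Z: "\<forall>j\<in>{1..<k}. Z j \<in> P" "1 \<le> k" and l: "l < k"
  shows "DDk ((T^^l) ` Wset Z k)"
  using l
proof (induction l)
  case 0 then show ?case using DD_Wset[OF Z] by simp
next
  case (Suc l)
  have IH: "DDk ((T^^l) ` Wset Z k)" using Suc by simp
  have ZP: "Z (Suc l) \<in> P" using Z Suc.prems by auto
  have "(T^^Suc l) ` Wset Z k = Z (Suc l) \<inter> Tinv -` ((T^^l) ` Wset Z k)"
  proof
    show "(T^^Suc l) ` Wset Z k \<subseteq> Z (Suc l) \<inter> Tinv -` ((T^^l) ` Wset Z k)"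
    proof
      fix y assume "y \<in> (T^^Suc l) ` Wset Z k"
      then obtain w where w: "w \<in> Wset Z k" "y = (T^^Suc l) w" by auto
      have "Suc l \<in> {1..<k}" using Suc.prems by auto
      then have "(T^^Suc l) w \<in> Z (Suc l)" using w(1) unfolding Wset_def by blast
      then have "y \<in> Z (Suc l)" by (simp only: w(2))
      moreover have "Tinv y = (T^^l) w" using w TT2 by simp
      ultimately show "y \<in> Z (Suc l) \<inter> Tinv -` ((T^^l) ` Wset Z k)" using w by auto
    qed
  next
    show "Z (Suc l) \<inter> Tinv -` ((T^^l) ` Wset Z k) \<subseteq> (T^^Suc l) ` Wset Z k"
    proof
      fix y assume "y \<in> Z (Suc l) \<inter> Tinv -` ((T^^l) ` Wset Z k)"
      then obtain w where w: "w \<in> Wset Z k" "Tinv y = (T^^l) w" by auto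
      then have "y = T ((T^^l) w)" using TT by metis
      then show "y \<in> (T^^Suc l) ` Wset Z k" using w by auto
    qed
  qed
  then show ?case using DDI(5)[OF ZP IH] by simp
qed

lemma Pbar_B: "Zb \<in> Pbar T E P \<Longrightarrow> cp_fun (chi Zb :: 'a \<Rightarrow> 'k) \<in> Bsub T Tinv invol P"
proof -
  assume "Zb \<in> Pbar T E P"
  then obtain W k l where W: "k \<ge> 1" "W \<in> Vk T E P k" "l < k" "Zb = (T^^l) ` W" using Pbar_mem by auto
  then obtain Z where Z: "\<forall>j\<in>{1..<k}. Z j \<in> P" "W = Wset Z k" unfolding Vk_eq by auto
  have "DDk Zb" using DD_image[OF Z(1) W(1) W(3)] W Z by simp
  then show ?thesis unfolding DD_def[OF TT TT2 inv] cp_fun_mono .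
qed

end
end


theorem lemma3p9:
  fixes T Tinv :: "'a::metric_space \<Rightarrow> 'a"
    and \<mu> :: "'a measure"
    and invol :: "'k::field \<Rightarrow> 'k"
    and E :: "'a set" and P :: "'a set set"
  assumes X_infinite: "infinite (UNIV :: 'a set)"
    and X_compact: "compact (UNIV :: 'a set)"
    and X_tdisc: "totally_disconnected_space TYPE('a)"
    and T_homeo: "homeomorphism UNIV UNIV T Tinv"
    and mu_prob: "prob_space \<mu>"
    and mu_sets: "sets \<mu> = sets borel"
    and mu_full: "full_measure \<mu>"
    and mu_inv: "T_invariant T \<mu>"
    and mu_erg: "ergodic T \<mu>"
    and K_inv: "field_involution invol"
    and E_clopen: "clopen E" and E_ne: "E \<noteq> {}"
    and P_part: "partition_of (UNIV - E) P"
  shows "(\<forall>k\<ge>1. partition_of (Y T E k 0) (Vk T E P k))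
       \<and> quasi_partition \<mu> (Pbar T E P)
       \<and> finer (Pbar T E P) (P \<union> {E})
       \<and> finer (Pbar T E P) (Ysets T E)
       \<and> orbit_closed T E (Pbar T E P)
       \<and> (\<forall>Q. quasi_partition \<mu> Q \<and> finer Q (P \<union> {E}) \<and> finer Q (Ysets T E)
              \<and> orbit_closed T E Q \<longrightarrow> finer Q (Pbar T E P))
       \<and> (\<forall>Zb\<in>Pbar T E P. cp_fun (chi Zb) \<in> Bsub T Tinv invol P)"
proof -
  have TT: "\<And>x. T (Tinv x) = x" and TT2: "\<And>x. Tinv (T x) = x"
    and contT: "continuous_on UNIV T" and contTi: "continuous_on UNIV Tinv"
    using T_homeo unfolding homeomorphism_def by auto
  interpret dyn T Tinv E P
    by unfold_locales (use TT TT2 contT contTi E_clopen P_part in auto)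
  interpret prob_space \<mu> by (rule mu_prob)
  have spaceU: "space \<mu> = UNIV" using sets_eq_imp_space_eq[OF mu_sets] by simp
  have Eo: "open E" using E_clopen unfolding clopen_def by simp
  have Epos: "measure \<mu> E > 0" using mu_full Eo E_ne unfolding full_measure_def by blast
  have invT: "measure \<mu> (T -` A) = measure \<mu> A" if "A \<in> sets borel" for A
    using mu_inv that unfolding T_invariant_def measure_def by simp
  have ergT: "measure \<mu> A = 0 \<or> measure \<mu> A = 1" if "A \<in> sets borel" "T -` A = A" for A
    using mu_erg that unfolding ergodic_def by simp
  have m1: "measure \<mu> (\<Union>n\<in>{1..}. (T^^n) -` E) = 1"
    by (rule recurrence[OF mu_prob mu_sets contT invT ergT Eo Epos])
  have vv: "T -` (Tinv -` A) = A" for A using TT2 by auto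
  have TiB: "Tinv -` A \<in> sets borel" if "A \<in> sets borel" for A
    using measurable_sets_borel[OF borel_measurable_continuous_onI[OF contTi] that] .
  have invTi: "measure \<mu> (Tinv -` A) = measure \<mu> A" if "A \<in> sets borel" for A
    using invT[OF TiB[OF that]] vv by simp
  have ergTi: "measure \<mu> A = 0 \<or> measure \<mu> A = 1" if "A \<in> sets borel" "Tinv -` A = A" for A
  proof -
    have "T -` A = A" using vv[of A] that(2) by simp
    then show ?thesis using ergT that(1) by blast
  qed
  have m2: "measure \<mu> (\<Union>n\<in>{1..}. (Tinv^^n) -` E) = 1"
    by (rule recurrence[OF mu_prob mu_sets contTi invTi ergTi Eo Epos])
  define U1 where "U1 = (\<Union>n\<in>{1..}. (T^^n) -` E)"
  define U2 where "U2 = (\<Union>n\<in>{1..}. (Tinv^^n) -` E)"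
  have U1s: "U1 \<in> sets \<mu>" unfolding U1_def mu_sets using cont_Tn Eo
    by (intro borel_open open_UN ballI open_vimage) auto
  have U2s: "U2 \<in> sets \<mu>" unfolding U2_def mu_sets using cont_Tin Eo
    by (intro borel_open open_UN ballI open_vimage) auto
  have "measure \<mu> (U1 - U1 \<inter> U2) = measure \<mu> U1 - measure \<mu> (U1 \<inter> U2)"
    using U1s U2s by (intro finite_measure_Diff) auto
  moreover have "measure \<mu> (U1 - U1 \<inter> U2) \<le> measure \<mu> (space \<mu> - U2)"
    using U1s U2s spaceU sets.compl_sets[OF U2s] by (intro finite_measure_mono) auto
  moreover have "measure \<mu> (space \<mu> - U2) = 0"
    using finite_measure_compl[OF U2s] m2 prob_space unfolding U2_def by simp
  moreover have "measure \<mu> U1 = 1" using m1 unfolding U1_def .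
  ultimately have m12: "measure \<mu> (U1 \<inter> U2) \<ge> 1" by (smt (verit) measure_nonneg)
  have sub: "U1 \<inter> U2 \<subseteq> \<Union>(Pbar T E P)"
  proof
    fix y assume "y \<in> U1 \<inter> U2"
    then obtain n j where "(T^^n) y \<in> E" "1 \<le> n" "(Tinv^^j) y \<in> E" unfolding U1_def U2_def by auto
    then show "y \<in> \<Union>(Pbar T E P)" by (rule cover)
  qed
  have "open (\<Union>(Pbar T E P))" using Pbar_ne_clopen unfolding clopen_def by auto
  then have Ps: "\<Union>(Pbar T E P) \<in> sets \<mu>" using mu_sets by simp
  have "measure \<mu> (\<Union>(Pbar T E P)) \<ge> 1"
    using finite_measure_mono[OF sub Ps] m12 by linarith
  then have mP: "measure \<mu> (\<Union>(Pbar T E P)) = 1" using prob_le_1 by (meson antisym)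
  have qp: "quasi_partition \<mu> (Pbar T E P)"
    unfolding quasi_partition_def using Pbar_countable Pbar_ne_clopen Pbar_disj mP by blast
  show ?thesis
    using Vk_partition qp Pbar_finer_PE Pbar_finer_Y Pbar_orbit
      coarsest[OF mu_prob mu_sets mu_full] Pbar_B[OF K_inv] by blast
qed


end
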